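(* Let $r\ge 1$ and let $x_0,y_0$ be positive integers. Let $p_r(x_0,y_0;x,y)$ denote the probability that the CA competition process with fitness ratio $r$ started at $(x_0,y_0)$ is at state $(x,y)$ at time $x+y-x_0-y_0$. Then for all integers $k\ge0$, $h\ge0$, \[ p_r(x_0,y_0;x_0+k,y_0+h)\ \le\ \frac{(x_0)_k\,(y_0)_h}{(r^{-1})_k\,(rx_0+y_0)_h}. \]
   Context: The CA competition process with fitness ratio $r\ge 1$ started at $(x_0,y_0)$ is the discrete-time Markov chain $\{(X_t,Y_t)\}_{t\ge0}$ on $\{(x,y)\in\mathbb{Z}^2: x\ge1,y\ge1\}$ with $(X_0,Y_0)=(x_0,y_0)$ and transition probabilities: from $(x,y)$ it moves to $(x+1,y)$ with probability $\frac{rx}{rx+y}$ and to $(x,y+1)$ with probability $\frac{y}{rx+y}$. $(x)_k=\prod_{i=0}^{k-1}(x+i)$ denotes the Pochhammer symbol (with $(x)_0=1$). *)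

theory Defs
  imports "HOL-Probability.Probability"
begin

definition CA_step :: "real \<Rightarrow> nat \<times> nat \<Rightarrow> (nat \<times> nat) pmf" where
  "CA_step r s = (case s of (x, y) \<Rightarrow>
     map_pmf (\<lambda>b. if b then (x + 1, y) else (x, y + 1))
       (bernoulli_pmf (r * real x / (r * real x + real y))))"

fun CA_dist :: "real \<Rightarrow> nat \<times> nat \<Rightarrow> nat \<Rightarrow> (nat \<times> nat) pmf" where
  "CA_dist r s0 0 = return_pmf s0"
| "CA_dist r s0 (Suc t) = bind_pmf (CA_dist r s0 t) (CA_step r)"

definition CA_p :: "real \<Rightarrow> nat \<Rightarrow> nat \<Rightarrow> nat \<Rightarrow> nat \<Rightarrow> real" where
  "CA_p r x0 y0 x y = pmf (CA_dist r (x0, y0) (x + y - x0 - y0)) (x, y)"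

end

theory Submission
  imports Defs
begin
definition pp :: "real \<Rightarrow> nat \<Rightarrow> nat \<Rightarrow> real" where "pp r a b = r * real a / (r * real a + real b)"
lemma pp_01: assumes "r \<ge> 0" shows "0 \<le> pp r a b \<and> pp r a b \<le> 1"
proof -
  have "0 \<le> r * real a" using assms by simp
  then show ?thesis unfolding pp_def
    by (cases "r * real a + real b = 0") (auto simp: divide_simps)
qed
lemma step_pmf: assumes "r \<ge> 0" shows
 "pmf (CA_step r s) (x,y) = (if s = (x - 1, y) \<and> x > 0 then pp r (x-1) y else 0)
    + (if s = (x, y - 1) \<and> y > 0 then 1 - pp r x (y-1) else 0)"
proof -
  obtain a b where s: "s = (a,b)" by force
  have bt: "pmf (bernoulli_pmf (pp r a b)) True = pp r a b" "pmf (bernoulli_pmf (pp r a b)) False = 1 - pp r a b"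
    using pp_01[OF assms] by auto
  have e: "CA_step r s = map_pmf (\<lambda>c. if c then (a + 1, b) else (a, b + 1)) (bernoulli_pmf (pp r a b))"
    unfolding s CA_step_def pp_def by simp
  have m: "pmf (CA_step r s) (x,y) = measure (bernoulli_pmf (pp r a b)) ((\<lambda>c. if c then (a + 1, b) else (a, b + 1)) -` {(x,y)})"
    unfolding e pmf_map by simp
  consider "(x,y) = (a+1,b)" | "(x,y) = (a,b+1)" | "(x,y) \<noteq> (a+1,b)" "(x,y) \<noteq> (a,b+1)" by blast
  then show ?thesis
  proof cases
    case 1
    then have "(\<lambda>c. if c then (a + 1, b) else (a, b + 1)) -` {(x,y)} = {True}" by (auto split: if_splits)
    then show ?thesis using 1 m bt s by (auto simp: measure_pmf_single split: if_splits)
  next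
    case 2
    then have "(\<lambda>c. if c then (a + 1, b) else (a, b + 1)) -` {(x,y)} = {False}" by (auto split: if_splits)
    then show ?thesis using 2 m bt s by (auto simp: measure_pmf_single)
  next
    case 3
    then have "(\<lambda>c. if c then (a + 1, b) else (a, b + 1)) -` {(x,y)} = {}" by (auto split: if_splits)
    then show ?thesis using 3 m bt s by auto
  qed
qed

lemma bind_pmf_eq: assumes "r \<ge> 0" shows
 "pmf (bind_pmf D (CA_step r)) (x,y) = (if x > 0 then pmf D (x-1,y) * pp r (x-1) y else 0)
    + (if y > 0 then pmf D (x, y-1) * (1 - pp r x (y-1)) else 0)"
proof -
  have "pmf (bind_pmf D (CA_step r)) (x,y) = measure_pmf.expectation D (\<lambda>s.
     (if x > 0 then pp r (x-1) y else 0) * indicator {(x-1,y)} s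
    + (if y > 0 then 1 - pp r x (y-1) else 0) * indicator {(x,y-1)} s)"
    unfolding pmf_bind by (intro Bochner_Integration.integral_cong refl) (auto simp: step_pmf[OF assms] indicator_def)
  also have "\<dots> = (if x > 0 then pp r (x-1) y else 0) * measure D {(x-1,y)} + (if y > 0 then 1 - pp r x (y-1) else 0) * measure D {(x,y-1)}"
    by (subst Bochner_Integration.integral_add) (auto intro!: integrable_real_indicator simp: measure_pmf.emeasure_finite less_top[symmetric])
  finally show ?thesis by (simp add: measure_pmf_single)
qed
lemma key:
  fixes r x0 y0 k h b :: real
  assumes r: "r \<ge> 1" and "x0 \<ge> 1" "y0 \<ge> 1" "k \<ge> 0" "h \<ge> 0" "b > 0"
  shows "b*(y0+h)/(r*x0+y0+h) * (r*(x0+k)/(r*(x0+k)+(y0+h+1)))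
     + b*(x0+k)/(1/r+k) * (1 - r*(x0+k+1)/(r*(x0+k+1)+(y0+h)))
     \<le> b*(x0+k)/(1/r+k)*(y0+h)/(r*x0+y0+h)"
proof -
  define A where "A = r*x0+y0+h"
  define u where "u = 1/r+k"
  define D1 where "D1 = A + r*k + 1"
  define D2 where "D2 = A + r*k + r"
  define R where "R = b*(x0+k)/(1/r+k)*(y0+h)/(r*x0+y0+h)"
  have rp: "r > 0" using r by simp
  have Ap: "A > 0" unfolding A_def using assms by (smt (verit) mult_pos_pos)
  have up: "u > 0" unfolding u_def using assms by (smt (verit) divide_pos_pos)
  have ru: "r * u = 1 + r*k" unfolding u_def using rp by (simp add: field_simps)
  have D1p: "D1 > 0" unfolding D1_def using Ap assms by (smt (verit) mult_nonneg_nonneg)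
  have D12: "D1 \<le> D2" unfolding D1_def D2_def using r by simp
  have Rp: "R \<ge> 0" unfolding R_def using assms up Ap unfolding u_def A_def
    by (intro divide_nonneg_pos mult_nonneg_nonneg) auto
  have d1: "r*(x0+k)+(y0+h+1) = D1" unfolding D1_def A_def by (simp add: algebra_simps)
  have Rd: "R = b*(x0+k)/u*(y0+h)/A" unfolding R_def u_def A_def by simp
  have e1: "b*(y0+h)/(r*x0+y0+h) * (r*(x0+k)/(r*(x0+k)+(y0+h+1))) = R * ((1 + r*k)/D1)"
    unfolding d1 A_def[symmetric] Rd ru[symmetric] using up Ap D1p by (simp add: field_simps)
  have d2: "r*(x0+k+1)+(y0+h) = D2" unfolding D2_def A_def by (simp add: algebra_simps)
  have D2p: "D2 > 0" using D1p D12 by simp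
  have e2: "1 - r*(x0+k+1)/(r*(x0+k+1)+(y0+h)) = (y0+h)/D2"
    unfolding d2 using D2p by (simp add: field_simps) (simp add: D2_def A_def algebra_simps)
  have e3: "b*(x0+k)/(1/r+k) * ((y0+h)/D2) = R * (A/D2)"
    unfolding Rd u_def[symmetric] using Ap up D2p by (simp add: field_simps)
  have "A/D2 \<le> A/D1" using D12 D1p Ap by (intro divide_left_mono) auto
  moreover have "(1 + r*k)/D1 + A/D1 = 1"
  proof -
    have "(1 + r*k) + A = D1" unfolding D1_def by simp
    then show ?thesis using D1p by (metis add_divide_distrib divide_self less_irrefl)
  qed
  ultimately have "(1 + r*k)/D1 + A/D2 \<le> 1" by linarith
  then have "R * ((1 + r*k)/D1) + R*(A/D2) \<le> R"
    using Rp by (metis distrib_left mult.right_neutral mult_left_mono)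
  then show ?thesis using e1 e2 e3 unfolding R_def by simp
qed
definition BB :: "real \<Rightarrow> nat \<Rightarrow> nat \<Rightarrow> nat \<Rightarrow> nat \<Rightarrow> real" where
  "BB r x0 y0 k h = pochhammer (real x0) k * pochhammer (real y0) h
       / (pochhammer (1 / r) k * pochhammer (r * real x0 + real y0) h)"

context
  fixes r :: real and x0 y0 :: nat
  assumes r: "r \<ge> 1" and x0: "x0 \<ge> 1" and y0: "y0 \<ge> 1"
begin

lemma BB_pos: "BB r x0 y0 k h > 0"
  unfolding BB_def using r x0 y0
  by (intro divide_pos_pos mult_pos_pos pochhammer_pos) (auto intro: add_pos_pos)

lemma BB_Suc_k: "BB r x0 y0 (Suc k) h = BB r x0 y0 k h * (real x0 + real k) / (1/r + real k)"
proof -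
  have "1/r + real k > 0" using r by (smt (verit) divide_pos_pos of_nat_0_le_iff)
  moreover have "pochhammer (1/r) k > 0" "pochhammer (r * real x0 + real y0) h > 0"
    using r x0 y0 by (auto intro!: pochhammer_pos add_pos_pos)
  ultimately show ?thesis unfolding BB_def pochhammer_Suc by (simp add: field_simps)
qed

lemma BB_Suc_h: "BB r x0 y0 k (Suc h) = BB r x0 y0 k h * (real y0 + real h) / (r * real x0 + real y0 + real h)"
proof -
  have "r * real x0 + real y0 + real h > 0" using r x0 y0 by (smt (verit) mult_pos_pos of_nat_0_le_iff of_nat_1 of_nat_mono)
  moreover have "pochhammer (1/r) k > 0" "pochhammer (r * real x0 + real y0) h > 0"
    using r x0 y0 by (auto intro!: pochhammer_pos add_pos_pos)
  ultimately show ?thesis unfolding BB_def pochhammer_Suc by (simp add: field_simps)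
qed

lemma BB_0: "BB r x0 y0 0 0 = 1" unfolding BB_def by simp

definition gg :: "nat \<Rightarrow> nat \<Rightarrow> real" where
  "gg a c = (if x0 \<le> a \<and> y0 \<le> c then BB r x0 y0 (a - x0) (c - y0) else 0)"

lemma gg_nonneg: "gg a c \<ge> 0" unfolding gg_def using BB_pos less_imp_le by auto

lemma step_ineq:
  "(if x > 0 then gg (x-1) y * pp r (x-1) y else 0)
   + (if y > 0 then gg x (y-1) * (1 - pp r x (y-1)) else 0) \<le> gg x y"
proof (cases "x0 \<le> x \<and> y0 \<le> y")
  case False
  then have gz: "x > 0 \<Longrightarrow> gg (x-1) y = 0" "y > 0 \<Longrightarrow> gg x (y-1) = 0" unfolding gg_def by auto
  show ?thesis using gg_nonneg[of x y] gz by (cases "x > 0"; cases "y > 0") simp_all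
next
  case True
  then obtain k h where xy: "x = x0 + k" "y = y0 + h" using le_Suc_ex by blast
  have xp: "x > 0" "y > 0" using xy x0 y0 by auto
  show ?thesis
  proof (cases k)
    case 0
    have g1: "gg (x-1) y = 0" unfolding gg_def using xy 0 x0 by auto
    show ?thesis
    proof (cases h)
      case 0
      have "gg x (y-1) = 0" unfolding gg_def using xy 0 y0 by auto
      then show ?thesis using g1 gg_nonneg[of x y] xp by simp
    next
      case (Suc h')
      have g2: "gg x (y-1) = BB r x0 y0 0 h'" unfolding gg_def using xy 0 Suc by auto
      have g3: "gg x y = BB r x0 y0 0 h' * (real y0 + real h') / (r * real x0 + real y0 + real h')"
        unfolding gg_def using xy 0 Suc BB_Suc_h by auto
      have pos: "r * real x0 + (real y0 + real h') > 0" using r x0 y0 by (smt (verit) mult_pos_pos of_nat_0_le_iff of_nat_1 of_nat_mono)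
      have "1 - pp r x (y-1) = (real y0 + real h') / (r * real x0 + real y0 + real h')"
        unfolding pp_def using xy 0 Suc pos by (simp add: field_simps)
      have e: "gg x (y-1) * (1 - pp r x (y-1)) = gg x y" unfolding g2 g3 \<open>1 - pp r x (y-1) = _\<close> by (rule times_divide_eq_right)
      have a1: "(if x > 0 then gg (x-1) y * pp r (x-1) y else 0) = 0" using g1 by simp
      have a2: "(if y > 0 then gg x (y-1) * (1 - pp r x (y-1)) else 0) = gg x y"
        by (subst if_P[OF xp(2)]) (rule e)
      show ?thesis unfolding a1 a2 by simp
    qed
  next
    case (Suc k')
    show ?thesis
    proof (cases h)
      case 0
      have g2: "gg x (y-1) = 0" unfolding gg_def using xy 0 y0 by auto
      have g1: "gg (x-1) y = BB r x0 y0 k' 0" unfolding gg_def using xy 0 Suc by auto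
      have g3: "gg x y = BB r x0 y0 k' 0 * (real x0 + real k') / (1/r + real k')"
        unfolding gg_def using xy 0 Suc BB_Suc_k by auto
      have up: "1/r + real k' > 0" using r by (smt (verit) divide_pos_pos of_nat_0_le_iff)
      have rp: "r > 0" using r by simp
      have Xp: "real x0 + real k' > 0" using x0 by simp
      have D: "r * (real x0 + real k') + real y0 > 0" using rp Xp y0 by (smt (verit) mult_pos_pos of_nat_0_le_iff)
      have "pp r (x-1) y = r * (real x0 + real k') / (r * (real x0 + real k') + real y0)"
        unfolding pp_def using xy 0 Suc by simp
      also have "\<dots> \<le> (real x0 + real k') / (1/r + real k')"
      proof -
        have "r * (1/r + real k') = 1 + r * real k'" using rp by (simp add: field_simps)
        moreover have "r * 1 \<le> r * real x0" using x0 rp by (intro mult_left_mono) auto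
        moreover have "r * (real x0 + real k') = r * real x0 + r * real k'" by (simp add: distrib_left)
        moreover have "real y0 \<ge> 0" by simp
        ultimately have "r * (1/r + real k') \<le> r * (real x0 + real k') + real y0"
          using r by linarith
        then have "r * (real x0 + real k') / (r * (real x0 + real k') + real y0)
            \<le> r * (real x0 + real k') / (r * (1/r + real k'))"
          using up rp Xp D by (intro divide_left_mono) (auto intro!: mult_pos_pos)
        also have "\<dots> = (real x0 + real k') / (1/r + real k')" using rp by simp
        finally show ?thesis .
      qed
      finally have "pp r (x-1) y \<le> (real x0 + real k') / (1/r + real k')" .
      then have "BB r x0 y0 k' 0 * pp r (x-1) y \<le> BB r x0 y0 k' 0 * ((real x0 + real k') / (1/r + real k'))"
        using BB_pos less_imp_le mult_left_mono by blast
      then show ?thesis using g1 g2 g3 xp by simp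
    next
      case (Suc h')
      define b where "b = BB r x0 y0 k' h'"
      have g1: "gg (x-1) y = b * (real y0 + real h') / (r * real x0 + real y0 + real h')"
        unfolding gg_def b_def using xy \<open>k = Suc k'\<close> Suc BB_Suc_h by auto
      have g2: "gg x (y-1) = b * (real x0 + real k') / (1/r + real k')"
        unfolding gg_def b_def using xy \<open>k = Suc k'\<close> Suc BB_Suc_k by auto
      have g3: "gg x y = b * (real x0 + real k') / (1/r + real k') * (real y0 + real h') / (r * real x0 + real y0 + real h')"
        unfolding gg_def b_def using xy \<open>k = Suc k'\<close> Suc BB_Suc_k BB_Suc_h by auto
      have p1: "pp r (x-1) y = r * (real x0 + real k') / (r * (real x0 + real k') + (real y0 + real h' + 1))"
        unfolding pp_def using xy \<open>k = Suc k'\<close> Suc by (simp add: algebra_simps)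
      have p2: "pp r x (y-1) = r * (real x0 + real k' + 1) / (r * (real x0 + real k' + 1) + (real y0 + real h'))"
        unfolding pp_def using xy \<open>k = Suc k'\<close> Suc by (simp add: algebra_simps)
      have "b > 0" unfolding b_def by (rule BB_pos)
      from key[OF r _ _ _ _ this, of "real x0" "real y0" "real k'" "real h'"] x0 y0
      show ?thesis unfolding g1 g2 g3 p1 p2 using xp by (simp add: add.assoc)
    qed
  qed
qed

lemma gg_BB: "gg (x0+k) (y0+h) = BB r x0 y0 k h" unfolding gg_def by simp

lemma main_ind: "\<forall>x y. x + y = x0 + y0 + t \<longrightarrow> pmf (CA_dist r (x0, y0) t) (x, y) \<le> gg x y"
proof (induction t)
  case 0
  show ?case
  proof (intro allI impI)
    fix x y assume "x + y = x0 + y0 + 0"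
    show "pmf (CA_dist r (x0, y0) 0) (x, y) \<le> gg x y"
    proof (cases "(x, y) = (x0, y0)")
      case True
      then show ?thesis unfolding gg_def using BB_0 by (simp add: pmf_return)
    next
      case False
      then have "pmf (return_pmf (x0,y0)) (x,y) = 0" using False unfolding pmf_return indicator_def by auto
      then show ?thesis using gg_nonneg[of x y] by simp
    qed
  qed
next
  case (Suc t)
  show ?case
  proof (intro allI impI)
    fix x y assume xy: "x + y = x0 + y0 + Suc t"
    define D where "D = CA_dist r (x0, y0) t"
    have rp: "r \<ge> 0" using r by simp
    have "pmf (CA_dist r (x0, y0) (Suc t)) (x, y) = (if x > 0 then pmf D (x-1,y) * pp r (x-1) y else 0)
      + (if y > 0 then pmf D (x, y-1) * (1 - pp r x (y-1)) else 0)"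
      unfolding D_def by (simp add: bind_pmf_eq[OF rp])
    also have "\<dots> \<le> (if x > 0 then gg (x-1) y * pp r (x-1) y else 0)
      + (if y > 0 then gg x (y-1) * (1 - pp r x (y-1)) else 0)"
    proof (intro add_mono)
      show "(if x > 0 then pmf D (x-1,y) * pp r (x-1) y else 0) \<le> (if x > 0 then gg (x-1) y * pp r (x-1) y else 0)"
      proof (cases "x > 0")
        case True
        then have "pmf D (x-1,y) \<le> gg (x-1) y" using Suc.IH xy unfolding D_def by simp
        then show ?thesis using True pp_01[OF rp, of "x-1" y] by (simp add: mult_right_mono)
      qed simp
      show "(if y > 0 then pmf D (x, y-1) * (1 - pp r x (y-1)) else 0) \<le> (if y > 0 then gg x (y-1) * (1 - pp r x (y-1)) else 0)"
      proof (cases "y > 0")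
        case True
        then have "pmf D (x, y-1) \<le> gg x (y-1)" using Suc.IH xy unfolding D_def by simp
        then show ?thesis using True pp_01[OF rp, of x "y-1"] by (simp add: mult_right_mono)
      qed simp
    qed
    also have "\<dots> \<le> gg x y" by (rule step_ineq)
    finally show "pmf (CA_dist r (x0, y0) (Suc t)) (x, y) \<le> gg x y" .
  qed
qed

end

theorem lemma2:
  fixes r :: real and x0 y0 k h :: nat
  assumes "r \<ge> 1" and "x0 \<ge> 1" and "y0 \<ge> 1"
  shows "CA_p r x0 y0 (x0 + k) (y0 + h)
    \<le> pochhammer (real x0) k * pochhammer (real y0) h
       / (pochhammer (1 / r) k * pochhammer (r * real x0 + real y0) h)"
proof -
  have "CA_p r x0 y0 (x0 + k) (y0 + h) = pmf (CA_dist r (x0, y0) (k + h)) (x0 + k, y0 + h)"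
    unfolding CA_p_def by (simp add: algebra_simps)
  also have "\<dots> \<le> gg r x0 y0 (x0 + k) (y0 + h)"
    using main_ind[OF assms, of "k + h"] by simp
  also have "\<dots> = BB r x0 y0 k h" by (rule gg_BB[OF assms])
  finally show ?thesis unfolding BB_def .
qed
end
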